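(* Let $G$ be a graph on $n$ vertices and let $k$ be an integer with $2\leq k\leq n$. If $\psi_k(G)=n-k+1$, then $G$ is connected.
   Context: All graphs are finite, simple and nonempty. For a graph $G$ and a positive integer $k$, a $k$-path vertex cover ($k$-PVC) of $G$ is a set $S$ of vertices such that every path on $k$ vertices in $G$ contains at least one vertex of $S$ (if $G$ has no path on $k$ vertices, the empty set is a $k$-PVC). $\psi_k(G)$ denotes the minimum cardinality of a $k$-PVC of $G$. *)

theory Defs
  imports Main
begin

definition simple_graph :: "'a set \<Rightarrow> ('a \<Rightarrow> 'a \<Rightarrow> bool) \<Rightarrow> bool" where
  "simple_graph V E \<longleftrightarrow> finite V \<and> V \<noteq> {} \<and>
     (\<forall>u v. E u v \<longrightarrow> u \<in> V \<and> v \<in> V) \<and>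
     (\<forall>u v. E u v \<longrightarrow> E v u) \<and> (\<forall>v. \<not> E v v)"

definition is_path :: "'a set \<Rightarrow> ('a \<Rightarrow> 'a \<Rightarrow> bool) \<Rightarrow> 'a list \<Rightarrow> bool" where
  "is_path V E p \<longleftrightarrow> p \<noteq> [] \<and> set p \<subseteq> V \<and> distinct p \<and>
     (\<forall>i. Suc i < length p \<longrightarrow> E (p ! i) (p ! Suc i))"

definition is_kpvc :: "'a set \<Rightarrow> ('a \<Rightarrow> 'a \<Rightarrow> bool) \<Rightarrow> nat \<Rightarrow> 'a set \<Rightarrow> bool" where
  "is_kpvc V E k S \<longleftrightarrow> S \<subseteq> V \<and>
     (\<forall>p. is_path V E p \<and> length p = k \<longrightarrow> set p \<inter> S \<noteq> {})"

definition psi :: "'a set \<Rightarrow> ('a \<Rightarrow> 'a \<Rightarrow> bool) \<Rightarrow> nat \<Rightarrow> nat" where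
  "psi V E k = (LEAST m. \<exists>S. is_kpvc V E k S \<and> card S = m)"

definition connected_graph :: "'a set \<Rightarrow> ('a \<Rightarrow> 'a \<Rightarrow> bool) \<Rightarrow> bool" where
  "connected_graph V E \<longleftrightarrow> (\<forall>u\<in>V. \<forall>v\<in>V. \<exists>p. is_path V E p \<and> hd p = u \<and> last p = v)"

end

theory Submission
  imports Defs
begin

lemma path_sub:
  assumes "is_path V E p" "i \<le> j" "j < length p"
  shows "is_path V E (drop i (take (Suc j) p)) \<and> hd (drop i (take (Suc j) p)) = p ! i
         \<and> last (drop i (take (Suc j) p)) = p ! j"
proof -
  let ?q = "drop i (take (Suc j) p)"
  have len: "length ?q = Suc j - i" using assms by simp
  have nth: "\<And>m. m < length ?q \<Longrightarrow> ?q ! m = p ! (i + m)" using assms by simp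
  have "?q \<noteq> []" using len assms by simp
  moreover have "set ?q \<subseteq> V" using assms unfolding is_path_def
    by (meson in_set_dropD in_set_takeD subset_iff)
  moreover have "distinct ?q" using assms unfolding is_path_def by simp
  moreover have "\<forall>m. Suc m < length ?q \<longrightarrow> E (?q ! m) (?q ! Suc m)"
  proof (intro allI impI)
    fix m assume m: "Suc m < length ?q"
    then have "Suc (i+m) < length p" using len assms by simp
    then show "E (?q ! m) (?q ! Suc m)" using assms(1) nth[of m] nth[of "Suc m"] m
      unfolding is_path_def by simp
  qed
  ultimately have "is_path V E ?q" unfolding is_path_def by blast
  moreover have "hd ?q = p ! i" using nth[of 0] len assms \<open>?q \<noteq> []\<close> by (simp add: hd_conv_nth)
  moreover have "last ?q = p ! j" using nth[of "length ?q - 1"] len assms \<open>?q \<noteq> []\<close>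
    by (simp add: last_conv_nth)
  ultimately show ?thesis by blast
qed

lemma path_rev:
  assumes "is_path V E p" "\<forall>u v. E u v \<longrightarrow> E v u"
  shows "is_path V E (rev p)"
  unfolding is_path_def
proof (intro conjI allI impI)
  show "rev p \<noteq> []" "set (rev p) \<subseteq> V" "distinct (rev p)" using assms unfolding is_path_def by auto
  fix i assume i: "Suc i < length (rev p)"
  let ?n = "length p"
  have "E (p ! (?n - Suc (Suc i))) (p ! Suc (?n - Suc (Suc i)))"
    using assms(1) i unfolding is_path_def by simp
  moreover have "Suc (?n - Suc (Suc i)) = ?n - Suc i" using i by simp
  ultimately have "E (p ! (?n - Suc i)) (p ! (?n - Suc (Suc i)))" using assms(2) by metis
  then show "E (rev p ! i) (rev p ! Suc i)" using i by (simp add: rev_nth)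
qed

theorem mainTheorem9:
  fixes V :: "'a set" and E :: "'a \<Rightarrow> 'a \<Rightarrow> bool" and k :: nat
  assumes "simple_graph V E"
    and "2 \<le> k" and "k \<le> card V"
    and "psi V E k = card V - k + 1"
  shows "connected_graph V E"
proof (rule ccontr)
  assume "\<not> connected_graph V E"
  then obtain u v where uv: "u \<in> V" "v \<in> V" and np: "\<not> (\<exists>p. is_path V E p \<and> hd p = u \<and> last p = v)"
    unfolding connected_graph_def by blast
  have fin: "finite V" and sym: "\<forall>u v. E u v \<longrightarrow> E v u" using assms(1) unfolding simple_graph_def by auto
  have "u \<noteq> v"
  proof
    assume "u = v"
    have "is_path V E [u]" using uv unfolding is_path_def by simp
    then show False using np \<open>u = v\<close> by fastforce
  qed
  have "card (V - {u,v}) = card V - 2" using uv \<open>u \<noteq> v\<close> fin by (simp add: card_Diff_subset)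
  then obtain W where W: "W \<subseteq> V - {u,v}" "card W = k - 2"
    using assms(3) by (metis obtain_subset_with_card_n diff_le_mono)
  define T where "T = insert u (insert v W)"
  have finW: "finite W" using W fin by (meson finite_Diff finite_subset)
  have cT: "card T = k" proof -
    have "u \<notin> insert v W" "v \<notin> W" using W \<open>u \<noteq> v\<close> by auto
    then show ?thesis using W finW assms(2) unfolding T_def by simp
  qed
  have TV: "T \<subseteq> V" using W uv unfolding T_def by auto
  define S where "S = V - T"
  have cS: "card S = card V - k" using cT TV fin unfolding S_def by (metis card_Diff_subset finite_subset)
  have "is_kpvc V E k S"
    unfolding is_kpvc_def
  proof (intro conjI allI impI)
    show "S \<subseteq> V" unfolding S_def by auto
    fix p assume p: "is_path V E p \<and> length p = k"
    show "set p \<inter> S \<noteq> {}"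
    proof
      assume "set p \<inter> S = {}"
      then have sub: "set p \<subseteq> T" using p unfolding S_def is_path_def by auto
      have "card (set p) = k" using p unfolding is_path_def by (simp add: distinct_card)
      then have "set p = T" using sub cT fin TV
        by (metis card_subset_eq finite_subset)
      then have "u \<in> set p" "v \<in> set p" unfolding T_def by auto
      then obtain i j where ij: "i < length p" "j < length p" "p ! i = u" "p ! j = v"
        by (metis in_set_conv_nth)
      show False
      proof (cases "i \<le> j")
        case True
        then show False using path_sub[OF conjunct1[OF p] True ij(2)] ij np by metis
      next
        case False
        then have "j \<le> i" by simp
        from path_sub[OF conjunct1[OF p] this ij(1)]
        obtain q where q: "is_path V E q" "hd q = v" "last q = u" using ij by metis
        have "is_path V E (rev q)" using path_rev[OF q(1) sym] .
        moreover have "q \<noteq> []" using q(1) unfolding is_path_def by simp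
        ultimately show False using q np hd_rev[of q] last_rev[of q] by metis
      qed
    qed
  qed
  then have "psi V E k \<le> card V - k" unfolding psi_def using cS
    by (metis (mono_tags, lifting) Least_le)
  then show False using assms(4) by simp
qed

end
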